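(* For all $j_1,j_2,j_3\in\tfrac12\mathbb{N}^+$, with the three tensor factors of sizes $2j_1+1,2j_2+1,2j_3+1$: \begin{align*} R^{(j_1,j_2)}_{12}(t)\widehat R^{(j_1,j_3)}_{13}\widehat R^{(j_2,j_3)}_{23}&=\widehat R^{(j_2,j_3)}_{23}\widehat R^{(j_1,j_3)}_{13}R^{(j_1,j_2)}_{12}(t),\\ R^{(j_1,j_3)}_{13}(t)\widehat R^{(j_2,j_3)}_{23}\widehat R^{(j_1,j_2)}_{12}&=\widehat R^{(j_1,j_2)}_{12}\widehat R^{(j_2,j_3)}_{23}R^{(j_1,j_3)}_{13}(t),\\ R^{(j_2,j_3)}_{23}(t)\widehat R^{(j_1,j_2)}_{12}\widehat R^{(j_1,j_3)}_{13}&=\widehat R^{(j_1,j_3)}_{13}\widehat R^{(j_1,j_2)}_{12}R^{(j_2,j_3)}_{23}(t),\\ R^{(j_1,j_2)}_{12}(t)\widehat R^{(j_2,j_3)}_{23}\widehat R^{(j_1,j_3)}_{13}&=\widehat R^{(j_1,j_3)}_{13}\widehat R^{(j_2,j_3)}_{23}R^{(j_1,j_2)}_{12}(t),\\ R^{(j_1,j_3)}_{13}(t)\widehat R^{(j_1,j_2)}_{12}\widehat R^{(j_2,j_3)}_{23}&=\widehat R^{(j_2,j_3)}_{23}\widehat R^{(j_1,j_2)}_{12}R^{(j_1,j_3)}_{13}(t),\\ R^{(j_2,j_3)}_{23}(t)\widehat R^{(j_1,j_3)}_{13}\widehat R^{(j_1,j_2)}_{12}&=\widehat R^{(j_1,j_2)}_{12}\widehat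 R^{(j_1,j_3)}_{13}R^{(j_2,j_3)}_{23}(t). \end{align*}
   Context: $\mathbb{F}$ is a field of characteristic zero in which every element has a square root; $q\in\mathbb{F}$ nonzero, not a root of unity, with fixed square root $q^{1/2}$ ($q^{k/2}:=(q^{1/2})^k$); other $(\cdot)^{1/2}$ are fixed square roots in $\mathbb{F}$. $[n]_q=\frac{q^n-q^{-n}}{q-q^{-1}}$, $c(t)=t-t^{-1}$, $\tfrac12\mathbb{N}^+=\{\tfrac12,1,\tfrac32,\dots\}$, $t$ an indeterminate, $\otimes$ Kronecker product. Leg notation: for factors $\mathbb{F}^{n_1}\otimes\mathbb{F}^{n_2}\otimes\mathbb{F}^{n_3}$, $X_{12}=X\otimes I_{n_3}$, $X_{23}=I_{n_1}\otimes X$, $X_{13}=P(X\otimes I_{n_2})P$ with $P$ the flip of factors 2,3; for non-square $Y$, $Y_{12}=Y\otimes I_{n_3}$, $Y_{23}=I_{n_1}\otimes Y$. For $j\in\tfrac12\mathbb{N}^+$: $\mathcal{E}^{(j+\frac12)}$ is $(4j+2)\times(2j+2)$ with only nonzero entries $\mathcal{E}_{(a,a)}=\big(\frac{[2j+2-a]_q}{[2j+1]_q}\big)^{1/2}$, $\mathcal{E}_{(a+2j+1,a+1)}=\big(\frac{[a]_q}{[2j+1]_q}\big)^{1/2}$ ($1\le a\le 2j+1$); $\mathcal{F}^{(j+\frac12)}$ is $(2j+2)\times(4j+2)$ with only nonzero entries $\mathcal{F}_{(a,a)}=\frac{([2j+2-a]_q[2j+1]_q)^{1/2}}{[2j+2-a]_q+[a-1]_q}$,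 $\mathcal{F}_{(a+1,a+2j+1)}=\frac{([a]_q[2j+1]_q)^{1/2}}{[2j+1-a]_q+[a]_q}$ ($1\le a\le 2j+1$). $R^{(\frac12,\frac12)}(t)$ is the $4\times4$ matrix with rows $(c(qt),0,0,0),(0,c(t),c(q),0),(0,c(q),c(t),0),(0,0,0,c(qt))$; recursively $R^{(\frac12,j+\frac12)}(t)=\mathcal{F}^{(j+\frac12)}_{23}R^{(\frac12,j)}_{13}(q^{-1/2}t)R^{(\frac12,\frac12)}_{12}(q^{j}t)\mathcal{E}^{(j+\frac12)}_{23}$ (factor sizes $2,2,2j+1$) and $R^{(j_1+\frac12,j_2)}(t)=\mathcal{F}^{(j_1+\frac12)}_{12}R^{(\frac12,j_2)}_{13}(q^{-j_1}t)R^{(j_1,j_2)}_{23}(q^{1/2}t)\mathcal{E}^{(j_1+\frac12)}_{12}$ (factor sizes $2,2j_1+1,2j_2+1$). $\widehat R^{(j_1,j_2)}=q^{2\,\mathrm{diag}(j_1,\dots,-j_1)\otimes\mathrm{diag}(j_2,\dots,-j_2)}$ (diagonal with entries $q^{2\alpha\beta}$). *)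

theory Defs
  imports "Jordan_Normal_Form.Matrix"
          "HOL-Computational_Algebra.Polynomial"
          "HOL-Computational_Algebra.Fraction_Field"
begin

type_synonym 'a ratfun = "'a poly fract"

definition cst :: "'a::field \<Rightarrow> 'a ratfun" where
  "cst c = Fract [:c:] 1"

definition indet :: "'a::field ratfun" where
  "indet = Fract [:0, 1:] 1"

definition qnum :: "'a::field \<Rightarrow> int \<Rightarrow> 'a" where
  "qnum q n = (q powi n - q powi (-n)) / (q - inverse q)"

definition cfun :: "'b::field \<Rightarrow> 'b" where
  "cfun x = x - inverse x"

section \<open>Kronecker product and leg notation (0-based indices)\<close>

definition kron :: "'b::semiring_1 mat \<Rightarrow> 'b mat \<Rightarrow> 'b mat" where
  "kron A B = mat (dim_row A * dim_row B) (dim_col A * dim_col B)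
     (\<lambda>(i,j). A $$ (i div dim_row B, j div dim_col B) * B $$ (i mod dim_row B, j mod dim_col B))"

text \<open>Permutation matrix F^n1 (x) F^n2 (x) F^n3 -> F^n1 (x) F^n3 (x) F^n2 (flip of factors 2,3).\<close>
definition flip23 :: "nat \<Rightarrow> nat \<Rightarrow> nat \<Rightarrow> 'b::semiring_1 mat" where
  "flip23 n1 n2 n3 = mat (n1*n3*n2) (n1*n2*n3)
     (\<lambda>(r,k). if r div (n3*n2) = k div (n2*n3) \<and> r mod n2 = (k div n3) mod n2
                 \<and> (r div n2) mod n3 = k mod n3 then 1 else 0)"

definition leg12 :: "'b::semiring_1 mat \<Rightarrow> nat \<Rightarrow> 'b mat" where
  "leg12 X n3 = kron X (1\<^sub>m n3)"

definition leg23 :: "nat \<Rightarrow> 'b::semiring_1 mat \<Rightarrow> 'b mat" where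
  "leg23 n1 X = kron (1\<^sub>m n1) X"

definition leg13 :: "nat \<Rightarrow> nat \<Rightarrow> nat \<Rightarrow> 'b::semiring_1 mat \<Rightarrow> 'b mat" where
  "leg13 n1 n2 n3 X = flip23 n1 n3 n2 * kron X (1\<^sub>m n2) * flip23 n1 n2 n3"

section \<open>The matrices E and F (n = 2j; Emat n = E^(j+1/2))\<close>

text \<open>q: the parameter, sr: the fixed square-root function of the field.\<close>

definition Emat :: "'a::field \<Rightarrow> ('a \<Rightarrow> 'a) \<Rightarrow> nat \<Rightarrow> 'a mat" where
  "Emat q sr n = mat (2*n+2) (n+2) (\<lambda>(i,k).
     if i \<le> n \<and> k = i then sr (qnum q (int n + 1 - int i) / qnum q (int n + 1))
     else if n+1 \<le> i \<and> i \<le> 2*n+1 \<and> k = i - n then sr (qnum q (int k) / qnum q (int n + 1))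
     else 0)"

definition Fmat :: "'a::field \<Rightarrow> ('a \<Rightarrow> 'a) \<Rightarrow> nat \<Rightarrow> 'a mat" where
  "Fmat q sr n = mat (n+2) (2*n+2) (\<lambda>(i,k).
     if k \<le> n \<and> i = k then
        sr (qnum q (int n + 1 - int k) * qnum q (int n + 1))
          / (qnum q (int n + 1 - int k) + qnum q (int k))
     else if n+1 \<le> k \<and> k \<le> 2*n+1 \<and> i = k - n then
        sr (qnum q (int i) * qnum q (int n + 1))
          / (qnum q (int n + 1 - int i) + qnum q (int i))
     else 0)"

section \<open>R-matrices over F(t); s is the fixed square root of q\<close>

definition Rbase :: "'a::field \<Rightarrow> 'a ratfun \<Rightarrow> 'a ratfun mat" where
  "Rbase q t = mat_of_rows_list 4
     [[cfun (cst q * t), 0, 0, 0],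
      [0, cfun t, cfun (cst q), 0],
      [0, cfun (cst q), cfun t, 0],
      [0, 0, 0, cfun (cst q * t)]]"

text \<open>Rhalf q s sr n t = R^(1/2, n/2)(t), for n \<ge> 1.\<close>
fun Rhalf :: "'a::field \<Rightarrow> 'a \<Rightarrow> ('a \<Rightarrow> 'a) \<Rightarrow> nat \<Rightarrow> 'a ratfun \<Rightarrow> 'a ratfun mat" where
  "Rhalf q s sr 0 t = 0\<^sub>m 0 0"
| "Rhalf q s sr (Suc 0) t = Rbase q t"
| "Rhalf q s sr (Suc (Suc m)) t =
     leg23 2 (map_mat cst (Fmat q sr (Suc m)))
   * leg13 2 2 (Suc m + 1) (Rhalf q s sr (Suc m) (inverse (cst s) * t))
   * leg12 (Rbase q (cst s ^ Suc m * t)) (Suc m + 1)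
   * leg23 2 (map_mat cst (Emat q sr (Suc m)))"

text \<open>Rmat q s sr n1 n2 t = R^(n1/2, n2/2)(t), for n1, n2 \<ge> 1.\<close>
fun Rmat :: "'a::field \<Rightarrow> 'a \<Rightarrow> ('a \<Rightarrow> 'a) \<Rightarrow> nat \<Rightarrow> nat \<Rightarrow> 'a ratfun \<Rightarrow> 'a ratfun mat" where
  "Rmat q s sr 0 n2 t = 0\<^sub>m 0 0"
| "Rmat q s sr (Suc 0) n2 t = Rhalf q s sr n2 t"
| "Rmat q s sr (Suc (Suc m)) n2 t =
     leg12 (map_mat cst (Fmat q sr (Suc m))) (n2 + 1)
   * leg13 2 (Suc m + 1) (n2 + 1) (Rhalf q s sr n2 (inverse (cst s) ^ Suc m * t))
   * leg23 2 (Rmat q s sr (Suc m) n2 (cst s * t))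
   * leg12 (map_mat cst (Emat q sr (Suc m))) (n2 + 1)"

text \<open>Rhat s n1 n2 = q^(2 diag(j1..-j1) (x) diag(j2..-j2)), j_i = n_i/2,
  entries q^(2 alpha beta) = s^(4 alpha beta) = s^((n1-2a)(n2-2b)).\<close>
definition Rhat :: "'a::field \<Rightarrow> nat \<Rightarrow> nat \<Rightarrow> 'a ratfun mat" where
  "Rhat s n1 n2 = mat ((n1+1)*(n2+1)) ((n1+1)*(n2+1)) (\<lambda>(i,k).
     if i = k then cst (s powi ((int n1 - 2 * int (i div (n2+1))) * (int n2 - 2 * int (i mod (n2+1)))))
     else 0)"

end

theory Submission
  imports Defs
begin

lemma cst_0[simp]: "cst 0 = 0"
  by (simp add: cst_def fract_collapse)

lemma cst_mult: "cst (x * y) = cst x * cst y"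
  by (simp add: cst_def mult_fract mult.commute)

lemma mat_mult_perm_left:
  fixes P :: "'b::semiring_1 mat"
  assumes P: "P \<in> carrier_mat n m" and M: "M \<in> carrier_mat m l"
    and r: "r < n" and j: "j < l" and sr: "\<sigma> < m"
    and Pe: "\<And>k. k < m \<Longrightarrow> P $$ (r,k) = (if k = \<sigma> then 1 else 0)"
  shows "(P * M) $$ (r,j) = M $$ (\<sigma>, j)"
proof -
  have "(P * M) $$ (r,j) = (\<Sum>k\<in>{0..<m}. P $$ (r,k) * M $$ (k,j))"
    using P M r j by (simp add: scalar_prod_def)
  also have "\<dots> = (\<Sum>k\<in>{0..<m}. if k = \<sigma> then M $$ (k,j) else 0)"
    by (rule sum.cong) (auto simp: Pe)
  also have "\<dots> = M $$ (\<sigma>, j)" using sr by simp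
  finally show ?thesis .
qed

lemma mat_mult_perm_right:
  fixes P :: "'b::semiring_1 mat"
  assumes P: "P \<in> carrier_mat m l" and M: "M \<in> carrier_mat n m"
    and r: "r < n" and j: "j < l" and sr: "\<sigma> < m"
    and Pe: "\<And>k. k < m \<Longrightarrow> P $$ (k,j) = (if k = \<sigma> then 1 else 0)"
  shows "(M * P) $$ (r,j) = M $$ (r, \<sigma>)"
proof -
  have "(M * P) $$ (r,j) = (\<Sum>k\<in>{0..<m}. M $$ (r,k) * P $$ (k,j))"
    using P M r j by (simp add: scalar_prod_def)
  also have "\<dots> = (\<Sum>k\<in>{0..<m}. if k = \<sigma> then M $$ (r,k) else 0)"
    by (rule sum.cong) (auto simp: Pe)
  also have "\<dots> = M $$ (r, \<sigma>)" using sr by simp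
  finally show ?thesis .
qed

lemma divmod_lin[simp]: "c < (n::nat) \<Longrightarrow> (a * n + c) div n = a"
  by simp
lemma divmod_lin2[simp]: "c < (n::nat) \<Longrightarrow> (a * n + c) mod n = c"
  by simp

lemma mod_mult_div': "(k::nat) mod (a * b) div b = k div b mod a"
proof (cases "b = 0")
  case True then show ?thesis by simp
next
  case False
  have "k mod (a * b) = b * (k div b mod a) + k mod b"
    using mod_mult2_eq[of k b a] by (simp add: mult.commute)
  then show ?thesis using False by simp
qed

lemma decomp3:
  fixes k n2 n3 :: nat
  assumes "0 < n2" "0 < n3"
  shows "(k div n2 div n3 = a \<and> k div n2 mod n3 = c \<and> k mod n2 = b \<and> b < n2 \<and> c < n3)
     \<longleftrightarrow> (k = (a * n3 + c) * n2 + b \<and> b < n2 \<and> c < n3)"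
proof
  assume h: "k div n2 div n3 = a \<and> k div n2 mod n3 = c \<and> k mod n2 = b \<and> b < n2 \<and> c < n3"
  have "k = (k div n2 div n3 * n3 + k div n2 mod n3) * n2 + k mod n2" by simp
  then show "k = (a * n3 + c) * n2 + b \<and> b < n2 \<and> c < n3" using h by metis
next
  assume h: "k = (a * n3 + c) * n2 + b \<and> b < n2 \<and> c < n3"
  then have 1: "k div n2 = a * n3 + c" "k mod n2 = b" by simp_all
  then have 2: "k div n2 div n3 = a" "k div n2 mod n3 = c" using h by simp_all
  show "k div n2 div n3 = a \<and> k div n2 mod n3 = c \<and> k mod n2 = b \<and> b < n2 \<and> c < n3"
    using h 1 2 by blast
qed

lemma pos3: assumes "i < n1*n2*(n3::nat)" shows "0 < n1 \<and> 0 < n2 \<and> 0 < n3"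
proof -
  have "0 < n1*n2*n3" using assms by linarith
  then show ?thesis by simp
qed
lemma pos2: assumes "i < n1*(n2::nat)" shows "0 < n1 \<and> 0 < n2"
proof -
  have "0 < n1*n2" using assms by linarith
  then show ?thesis by simp
qed

lemma kron_dims[simp]: "dim_row (kron A B) = dim_row A * dim_row B" "dim_col (kron A B) = dim_col A * dim_col B"
  by (simp_all add: kron_def)

lemma kron_index:
  "i < dim_row A * dim_row B \<Longrightarrow> k < dim_col A * dim_col B \<Longrightarrow>
   kron A B $$ (i,k) = A $$ (i div dim_row B, k div dim_col B) * B $$ (i mod dim_row B, k mod dim_col B)"
  unfolding kron_def by (subst index_mat(1)) auto

lemma leg12_carrier: "X \<in> carrier_mat r c \<Longrightarrow> leg12 X n \<in> carrier_mat (r*n) (c*n)"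
  unfolding leg12_def carrier_mat_def by simp

lemma leg23_carrier: "X \<in> carrier_mat r c \<Longrightarrow> leg23 n X \<in> carrier_mat (n*r) (n*c)"
  unfolding leg23_def carrier_mat_def by simp

lemma leg12_index:
  fixes X :: "'b::semiring_1 mat"
  assumes X: "X \<in> carrier_mat r c" and i: "i < r*n" and k: "k < c*n"
  shows "leg12 X n $$ (i,k) = (if i mod n = k mod n then X $$ (i div n, k div n) else 0)"
proof -
  have n: "0 < n" using pos2[OF i] by simp
  have "leg12 X n $$ (i,k) = X $$ (i div n, k div n) * (1\<^sub>m n) $$ (i mod n, k mod n)"
    unfolding leg12_def using X i k by (subst kron_index) auto
  also have "\<dots> = (if i mod n = k mod n then X $$ (i div n, k div n) else 0)"
    using n by (subst index_one_mat(1)) auto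
  finally show ?thesis .
qed

lemma leg23_index:
  fixes X :: "'b::semiring_1 mat"
  assumes X: "X \<in> carrier_mat r c" and i: "i < n*r" and k: "k < n*c"
  shows "leg23 n X $$ (i,k) = (if i div r = k div c then X $$ (i mod r, k mod c) else 0)"
proof -
  have "0 < r" "0 < c" using pos2[OF i] pos2[OF k] by auto
  moreover have "i div r < n" "k div c < n" using i k by (auto simp: less_mult_imp_div_less mult.commute)
  moreover have "leg23 n X $$ (i,k) = (1\<^sub>m n) $$ (i div r, k div c) * X $$ (i mod r, k mod c)"
    unfolding leg23_def using X i k by (subst kron_index) auto
  ultimately show ?thesis by (subst (asm) index_one_mat(1)) auto
qed

definition sig3 :: "nat \<Rightarrow> nat \<Rightarrow> nat \<Rightarrow> nat" where
  "sig3 n2 n3 i = (i div (n2*n3) * n3 + i mod n3) * n2 + (i div n3) mod n2"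

lemma sig3_lt: assumes "i < n1*n2*n3" shows "sig3 n2 n3 i < n1*n3*n2"
proof -
  have p: "0 < n2" "0 < n3" using pos3[OF assms(1)] by (auto simp: mult.commute)
  have a: "i div (n2*n3) < n1" using assms by (simp add: less_mult_imp_div_less mult.assoc)
  have "i div (n2*n3) * n3 + i mod n3 < n1 * n3"
  proof -
    have "i div (n2*n3) * n3 + i mod n3 < i div (n2*n3) * n3 + n3" using p by simp
    also have "\<dots> = (i div (n2*n3) + 1) * n3" by simp
    also have "\<dots> \<le> n1 * n3" using a by (intro mult_right_mono) auto
    finally show ?thesis .
  qed
  then have "(i div (n2*n3) * n3 + i mod n3) * n2 + (i div n3) mod n2 < (i div (n2*n3) * n3 + i mod n3) * n2 + n2"
    using p by simp
  also have "\<dots> = (i div (n2*n3) * n3 + i mod n3 + 1) * n2" by simp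
  also have "\<dots> \<le> n1 * n3 * n2" using \<open>_ < n1 * n3\<close> by (intro mult_right_mono) auto
  finally show ?thesis by (simp add: sig3_def)
qed

lemma sig3_div: "0 < n2 \<Longrightarrow> 0 < n3 \<Longrightarrow> sig3 n2 n3 i div n2 = i div (n2*n3) * n3 + i mod n3"
  by (simp add: sig3_def)
lemma sig3_mod: "0 < n2 \<Longrightarrow> sig3 n2 n3 i mod n2 = (i div n3) mod n2"
  by (simp add: sig3_def)

lemma flip_cond:
  assumes p: "0 < n2" "0 < n3"
  shows "(k div (n3*n2) = i div (n2*n3) \<and> k mod n2 = (i div n3) mod n2 \<and> (k div n2) mod n3 = i mod n3)
       \<longleftrightarrow> k = sig3 n2 n3 i"
proof -
  have e: "k div (n3*n2) = k div n2 div n3" by (metis div_mult2_eq mult.commute)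
  have b: "(i div n3) mod n2 < n2" "i mod n3 < n3" using p by simp_all
  note d = decomp3[OF p, of k "i div (n2*n3)" "i mod n3" "(i div n3) mod n2"]
  show ?thesis
    unfolding sig3_def e using d b by blast
qed

lemma flipR_index:
  assumes "k < n1*n3*n2" "i < n1*n2*n3"
  shows "(flip23 n1 n2 n3 :: 'b::semiring_1 mat) $$ (k,i) = (if k = sig3 n2 n3 i then 1 else 0)"
proof -
  have p: "0 < n2" "0 < n3" using pos3[OF assms(1)] by (auto simp: mult.commute)
  have "(flip23 n1 n2 n3 :: 'b::semiring_1 mat) $$ (k,i) = (if k div (n3*n2) = i div (n2*n3) \<and> k mod n2 = (i div n3) mod n2
                 \<and> (k div n2) mod n3 = i mod n3 then 1 else 0)"
    unfolding flip23_def using assms by (subst index_mat(1)) auto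
  then show ?thesis using flip_cond[OF p, of k i] by simp
qed

lemma flipL_index:
  assumes "r < n1*n2*n3" "k < n1*n3*n2"
  shows "(flip23 n1 n3 n2 :: 'b::semiring_1 mat) $$ (r,k) = (if k = sig3 n2 n3 r then 1 else 0)"
proof -
  have p: "0 < n2" "0 < n3" using pos3[OF assms(1)] by (auto simp: mult.commute)
  have "(flip23 n1 n3 n2 :: 'b::semiring_1 mat) $$ (r,k) = (if r div (n2*n3) = k div (n3*n2) \<and> r mod n3 = (k div n2) mod n3
                 \<and> (r div n3) mod n2 = k mod n2 then 1 else 0)"
    unfolding flip23_def using assms by (subst index_mat(1)) (auto simp: mult.commute mult.left_commute)
  then show ?thesis using flip_cond[OF p, of k r] by auto
qed

lemma flip23_dims[simp]: "dim_row (flip23 n1 n2 n3) = n1*n3*n2" "dim_col (flip23 n1 n2 n3) = n1*n2*n3"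
   unfolding flip23_def by (rule dim_row_mat, rule dim_col_mat)

lemma leg13_carrier: "leg13 n1 n2 n3 X \<in> carrier_mat (n1*n2*n3) (n1*n2*n3)"
  unfolding leg13_def carrier_mat_def by simp

lemma leg13_index:
  fixes X :: "'b::semiring_1 mat"
  assumes X: "X \<in> carrier_mat (n1*n3) (n1*n3)" and i: "i < n1*n2*n3" and k: "k < n1*n2*n3"
  shows "leg13 n1 n2 n3 X $$ (i,k) = (if (i div n3) mod n2 = (k div n3) mod n2
     then X $$ (i div (n2*n3) * n3 + i mod n3, k div (n2*n3) * n3 + k mod n3) else 0)"
proof -
  have p: "0 < n2" "0 < n3" using pos3[OF i] by auto
  let ?A = "flip23 n1 n3 n2 :: 'b mat"
  let ?K = "kron X (1\<^sub>m n2)"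
  let ?B = "flip23 n1 n2 n3 :: 'b mat"
  have A: "?A \<in> carrier_mat (n1*n2*n3) (n1*n3*n2)" by (rule carrier_matI) (simp_all only: flip23_dims)
  have K: "?K \<in> carrier_mat (n1*n3*n2) (n1*n3*n2)" using X by (intro carrier_matI) (simp_all only: kron_dims carrier_matD index_one_mat)
  have B: "?B \<in> carrier_mat (n1*n3*n2) (n1*n2*n3)" by (rule carrier_matI) (simp_all only: flip23_dims)
  have AK: "?A * ?K \<in> carrier_mat (n1*n2*n3) (n1*n3*n2)" by (rule mult_carrier_mat[OF A K])
  have "leg13 n1 n2 n3 X $$ (i,k) = (?A * ?K * ?B) $$ (i,k)" by (simp add: leg13_def)
  also have "\<dots> = (?A * ?K) $$ (i, sig3 n2 n3 k)"
    by (rule mat_mult_perm_right[OF B AK i k sig3_lt[OF k]]) (rule flipR_index[OF _ k])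
  also have "\<dots> = ?K $$ (sig3 n2 n3 i, sig3 n2 n3 k)"
    by (rule mat_mult_perm_left[OF A K i sig3_lt[OF k] sig3_lt[OF i]]) (rule flipL_index[OF i])
  also have "\<dots> = X $$ (sig3 n2 n3 i div n2, sig3 n2 n3 k div n2) * (1\<^sub>m n2) $$ (sig3 n2 n3 i mod n2, sig3 n2 n3 k mod n2)"
    using X sig3_lt[OF i] sig3_lt[OF k] by (subst kron_index) auto
  also have "\<dots> = (if (i div n3) mod n2 = (k div n3) mod n2
     then X $$ (i div (n2*n3) * n3 + i mod n3, k div (n2*n3) * n3 + k mod n3) else 0)"
    using p by (simp add: sig3_div sig3_mod del: divmod_lin divmod_lin2)
  finally show ?thesis .
qed


definition graded :: "(nat \<Rightarrow> 'w) \<Rightarrow> (nat \<Rightarrow> 'w) \<Rightarrow> 'b::zero mat \<Rightarrow> bool" where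
  "graded wr wc A \<longleftrightarrow> (\<forall>i<dim_row A. \<forall>k<dim_col A. A $$ (i,k) \<noteq> 0 \<longrightarrow> wr i = wc k)"

lemma gradedI:
  assumes "\<And>i k. i < dim_row A \<Longrightarrow> k < dim_col A \<Longrightarrow> A $$ (i,k) \<noteq> 0 \<Longrightarrow> wr i = wc k"
  shows "graded wr wc A"
  using assms unfolding graded_def by blast

lemma gradedD:
  "graded wr wc A \<Longrightarrow> i < dim_row A \<Longrightarrow> k < dim_col A \<Longrightarrow> A $$ (i,k) \<noteq> 0 \<Longrightarrow> wr i = wc k"
  unfolding graded_def by blast

lemma graded_mult:
  fixes A B :: "'b::semiring_0 mat"
  assumes A: "graded wr w A" and B: "graded w' wc B" and d: "dim_col A = dim_row B"
    and w: "\<And>j. j < dim_col A \<Longrightarrow> w j = w' j"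
  shows "graded wr wc (A * B)"
proof (rule gradedI)
  fix i k assume i: "i < dim_row (A*B)" and k: "k < dim_col (A*B)" and nz: "(A*B) $$ (i,k) \<noteq> 0"
  have i': "i < dim_row A" and k': "k < dim_col B" using i k by simp_all
  have "(A*B) $$ (i,k) = (\<Sum>j\<in>{0..<dim_col A}. A $$ (i,j) * B $$ (j,k))"
    using i' k' d by (simp add: scalar_prod_def)
  with nz obtain j where j: "j \<in> {0..<dim_col A}" and t: "A $$ (i,j) * B $$ (j,k) \<noteq> 0"
    by (metis (no_types, lifting) sum.neutral)
  have a: "A $$ (i,j) \<noteq> 0" and b: "B $$ (j,k) \<noteq> 0" using t by auto
  have j': "j < dim_col A" using j by simp
  have "wr i = w j" using gradedD[OF A i' j' a] .
  also have "\<dots> = w' j" using w j' by blast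
  also have "\<dots> = wc k" using gradedD[OF B _ k' b] j' d by simp
  finally show "wr i = wc k" .
qed

lemma graded_map:
  assumes "graded wr wc A" "f 0 = 0"
  shows "graded wr wc (map_mat f A)"
proof (rule gradedI)
  fix i k assume i: "i < dim_row (map_mat f A)" and k: "k < dim_col (map_mat f A)" and nz: "map_mat f A $$ (i,k) \<noteq> 0"
  have i': "i < dim_row A" and k': "k < dim_col A" using i k by simp_all
  have "A $$ (i,k) \<noteq> 0" using nz assms(2) i' k' by (auto simp: index_map_mat)
  then show "wr i = wc k" using gradedD[OF assms(1) i' k'] by blast
qed

lemma graded_leg12:
  fixes X :: "'b::semiring_1 mat"
  assumes X: "X \<in> carrier_mat r c" and g: "graded wr wc X"
  shows "graded (\<lambda>i. h (wr (i div n)) (i mod n)) (\<lambda>k. h (wc (k div n)) (k mod n)) (leg12 X n)"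
proof (rule gradedI)
  fix i k assume i0: "i < dim_row (leg12 X n)" and k0: "k < dim_col (leg12 X n)" and nz: "leg12 X n $$ (i,k) \<noteq> 0"
  have i: "i < r*n" and k: "k < c*n" using i0 k0 leg12_carrier[OF X, of n] by auto
  have i2: "i div n < r" and k2: "k div n < c" using i k by (auto simp: less_mult_imp_div_less)
  from nz have "i mod n = k mod n" and "X $$ (i div n, k div n) \<noteq> 0"
    unfolding leg12_index[OF X i k] by (auto split: if_splits)
  moreover have "wr (i div n) = wc (k div n)"
    using gradedD[OF g] i2 k2 X \<open>X $$ (i div n, k div n) \<noteq> 0\<close> by auto
  ultimately show "h (wr (i div n)) (i mod n) = h (wc (k div n)) (k mod n)" by simp
qed

lemma graded_leg23:
  fixes X :: "'b::semiring_1 mat"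
  assumes X: "X \<in> carrier_mat r c" and g: "graded wr wc X"
  shows "graded (\<lambda>i. h (i div r) (wr (i mod r))) (\<lambda>k. h (k div c) (wc (k mod c))) (leg23 n X)"
proof (rule gradedI)
  fix i k assume i0: "i < dim_row (leg23 n X)" and k0: "k < dim_col (leg23 n X)" and nz: "leg23 n X $$ (i,k) \<noteq> 0"
  have i: "i < n*r" and k: "k < n*c" using i0 k0 leg23_carrier[OF X, of n] by auto
  have "0 < r" "0 < c" using pos2[OF i] pos2[OF k] by auto
  then have i2: "i mod r < r" and k2: "k mod c < c" by auto
  from nz have "i div r = k div c" and "X $$ (i mod r, k mod c) \<noteq> 0"
    unfolding leg23_index[OF X i k] by (auto split: if_splits)
  moreover have "wr (i mod r) = wc (k mod c)"
    using gradedD[OF g] i2 k2 X \<open>X $$ (i mod r, k mod c) \<noteq> 0\<close> by auto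
  ultimately show "h (i div r) (wr (i mod r)) = h (k div c) (wc (k mod c))" by simp
qed

lemma idx13_lt:
  assumes i: "i < n1*n2*(n3::nat)"
  shows "i div (n2*n3) * n3 + i mod n3 < n1*n3"
proof -
  have p: "0 < n2" "0 < n3" using pos3[OF i] by auto
  have a: "i div (n2*n3) < n1" using i by (simp add: less_mult_imp_div_less mult.assoc)
  have "i div (n2*n3) * n3 + i mod n3 < i div (n2*n3) * n3 + n3" using p by simp
  also have "\<dots> = (i div (n2*n3) + 1) * n3" by simp
  also have "\<dots> \<le> n1 * n3" using a by (intro mult_right_mono) auto
  finally show ?thesis .
qed

lemma graded_leg13:
  fixes X :: "'b::semiring_1 mat"
  assumes X: "X \<in> carrier_mat (n1*n3) (n1*n3)" and g: "graded wr wc X"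
  shows "graded (\<lambda>i. h (wr (i div (n2*n3) * n3 + i mod n3)) ((i div n3) mod n2))
                (\<lambda>k. h (wc (k div (n2*n3) * n3 + k mod n3)) ((k div n3) mod n2)) (leg13 n1 n2 n3 X)"
proof (rule gradedI)
  fix i k assume i0: "i < dim_row (leg13 n1 n2 n3 X)" and k0: "k < dim_col (leg13 n1 n2 n3 X)"
    and nz: "leg13 n1 n2 n3 X $$ (i,k) \<noteq> 0"
  have i: "i < n1*n2*n3" and k: "k < n1*n2*n3" using i0 k0 leg13_carrier[of n1 n2 n3 X] by auto
  from nz have "(i div n3) mod n2 = (k div n3) mod n2"
    and nz2: "X $$ (i div (n2*n3) * n3 + i mod n3, k div (n2*n3) * n3 + k mod n3) \<noteq> 0"
    unfolding leg13_index[OF X i k] by (auto split: if_splits)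
  moreover have "wr (i div (n2*n3) * n3 + i mod n3) = wc (k div (n2*n3) * n3 + k mod n3)"
    using gradedD[OF g _ _ nz2] idx13_lt[OF i] idx13_lt[OF k] X by auto
  ultimately show "h (wr (i div (n2*n3) * n3 + i mod n3)) ((i div n3) mod n2) =
       h (wc (k div (n2*n3) * n3 + k mod n3)) ((k div n3) mod n2)" by simp
qed


definition wt :: "nat \<Rightarrow> nat \<Rightarrow> nat" where "wt n i = i div n + i mod n"

lemma wt_lo: "i < Suc n \<Longrightarrow> wt (Suc n) i = i"
  unfolding wt_def by simp

lemma wt_hi: assumes "Suc n \<le> i" "i < 2 * Suc n" shows "wt (Suc n) i = i - n"
proof -
  obtain d where d: "i = Suc n + d" using assms(1) le_Suc_ex by blast
  have dl: "d < Suc n" using assms(2) d by simp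
  have "i = 1 * Suc n + d" using d by simp
  then have "i div Suc n = 1" "i mod Suc n = d" using dl divmod_lin divmod_lin2 by metis+
  then show ?thesis unfolding wt_def using d by simp
qed

lemma Rbase_carrier: "Rbase q t \<in> carrier_mat 4 4"
  unfolding Rbase_def mat_of_rows_list_def carrier_mat_def by simp

lemma four_cases: "(i::nat) < 4 \<Longrightarrow> i = 0 \<or> i = 1 \<or> i = 2 \<or> i = 3"
  by auto

lemma Rbase_graded: "graded (wt 2) (wt 2) (Rbase q t)"
proof (rule gradedI)
  fix i k assume i0: "i < dim_row (Rbase q t)" and k0: "k < dim_col (Rbase q t)" and nz: "Rbase q t $$ (i,k) \<noteq> 0"
  have i: "i < 4" and k: "k < 4" using i0 k0 Rbase_carrier[of q t] by auto
  have e: "Rbase q t $$ (i,k) = [[cfun (cst q * t), 0, 0, 0],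
      [0, cfun t, cfun (cst q), 0],
      [0, cfun (cst q), cfun t, 0],
      [0, 0, 0, cfun (cst q * t)]] ! i ! k"
    unfolding Rbase_def mat_of_rows_list_def using i k by (subst index_mat(1)) auto
  have w: "wt 2 0 = 0" "wt 2 1 = 1" "wt 2 2 = 1" "wt 2 3 = 2" by (simp_all add: wt_def)
  show "wt 2 i = wt 2 k"
    using four_cases[OF i] four_cases[OF k] nz w unfolding e
    by (auto simp: numeral_eq_Suc)
qed

lemma Emat_carrier: "Emat q sr n \<in> carrier_mat (2 * Suc n) (Suc n + 1)"
  unfolding Emat_def carrier_mat_def by simp

lemma Fmat_carrier: "Fmat q sr n \<in> carrier_mat (Suc n + 1) (2 * Suc n)"
  unfolding Fmat_def carrier_mat_def by simp

lemma Emat_graded: "graded (wt (Suc n)) (\<lambda>k. k) (Emat q sr n)"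
proof (rule gradedI)
  fix i k assume i0: "i < dim_row (Emat q sr n)" and k0: "k < dim_col (Emat q sr n)" and nz: "Emat q sr n $$ (i,k) \<noteq> 0"
  have i: "i < 2 * Suc n" and k: "k < Suc n + 1" using i0 k0 Emat_carrier[of q sr n] by auto
  have e: "Emat q sr n $$ (i,k) = (if i \<le> n \<and> k = i then sr (qnum q (int n + 1 - int i) / qnum q (int n + 1))
     else if n+1 \<le> i \<and> i \<le> 2*n+1 \<and> k = i - n then sr (qnum q (int k) / qnum q (int n + 1))
     else 0)"
    unfolding Emat_def using i k by (subst index_mat(1)) auto
  show "wt (Suc n) i = k"
  proof (cases "i \<le> n \<and> k = i")
    case True then show ?thesis using wt_lo[of i n] by simp
  next
    case False
    then have "n+1 \<le> i \<and> i \<le> 2*n+1 \<and> k = i - n" using nz unfolding e by (auto split: if_splits)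
    then show ?thesis using wt_hi[of n i] i by simp
  qed
qed

lemma Fmat_graded: "graded (\<lambda>k. k) (wt (Suc n)) (Fmat q sr n)"
proof (rule gradedI)
  fix i k assume i0: "i < dim_row (Fmat q sr n)" and k0: "k < dim_col (Fmat q sr n)" and nz: "Fmat q sr n $$ (i,k) \<noteq> 0"
  have i: "i < Suc n + 1" and k: "k < 2 * Suc n" using i0 k0 Fmat_carrier[of q sr n] by auto
  have e: "Fmat q sr n $$ (i,k) = (if k \<le> n \<and> i = k then
        sr (qnum q (int n + 1 - int k) * qnum q (int n + 1))
          / (qnum q (int n + 1 - int k) + qnum q (int k))
     else if n+1 \<le> k \<and> k \<le> 2*n+1 \<and> i = k - n then
        sr (qnum q (int i) * qnum q (int n + 1))
          / (qnum q (int n + 1 - int i) + qnum q (int i))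
     else 0)"
    unfolding Fmat_def using i k by (subst index_mat(1)) auto
  show "i = wt (Suc n) k"
  proof (cases "k \<le> n \<and> i = k")
    case True then show ?thesis using wt_lo[of k n] by simp
  next
    case False
    then have "n+1 \<le> k \<and> k \<le> 2*n+1 \<and> i = k - n" using nz unfolding e by (auto split: if_splits)
    then show ?thesis using wt_hi[of n k] k by simp
  qed
qed


lemma divMP: "(j::nat) div (M*P) = j div P div M"
  by (metis div_mult2_eq mult.commute)

lemma modMP: "(j::nat) mod (M*P) mod P = j mod P"
  by (simp add: mod_mod_cancel)

lemma arith3:
  assumes P: "0 < (P::nat)"
  shows "wt M (j div P) + j mod P = j div P div M + j div P mod M + j mod P"
    and "wt P (j div (M*P) * P + j mod P) + (j div P) mod M = j div P div M + j div P mod M + j mod P"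
    and "j div (M*P) + wt P (j mod (M*P)) = j div P div M + j div P mod M + j mod P"
proof -
  show "wt M (j div P) + j mod P = j div P div M + j div P mod M + j mod P"
    unfolding wt_def by simp
  have l: "j mod P < P" using P by simp
  have "wt P (j div (M*P) * P + j mod P) = j div (M*P) + j mod P"
    unfolding wt_def using divmod_lin[OF l] divmod_lin2[OF l] by simp
  then show "wt P (j div (M*P) * P + j mod P) + (j div P) mod M = j div P div M + j div P mod M + j mod P"
    unfolding divMP by simp
  show "j div (M*P) + wt P (j mod (M*P)) = j div P div M + j div P mod M + j mod P"
    unfolding wt_def divMP modMP mod_mult_div' by simp
qed

lemma Rhalf_props:
  "Rhalf q s sr (Suc n) t \<in> carrier_mat (2*(Suc n+1)) (2*(Suc n+1)) \<and>
   graded (wt (Suc n+1)) (wt (Suc n+1)) (Rhalf q s sr (Suc n) t)"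
proof (induction n arbitrary: t)
  case 0
  have "Rhalf q s sr (Suc 0) t = Rbase q t" by simp
  moreover have "2*(Suc 0+1) = 4" "Suc 0 + 1 = 2" by simp_all
  ultimately show ?case using Rbase_carrier Rbase_graded by metis
next
  case (Suc m)
  define N where "N = Suc (Suc m)"
  have N0: "0 < N" by (simp add: N_def)
  have IH: "\<And>t. Rhalf q s sr (Suc m) t \<in> carrier_mat (2*N) (2*N) \<and> graded (wt N) (wt N) (Rhalf q s sr (Suc m) t)"
    using Suc.IH unfolding N_def by simp
  let ?F = "map_mat cst (Fmat q sr (Suc m))"
  let ?E = "map_mat cst (Emat q sr (Suc m))"
  let ?X = "Rhalf q s sr (Suc m) (inverse (cst s) * t)"
  let ?B = "Rbase q (cst s ^ Suc m * t)"
  have F: "?F \<in> carrier_mat (N+1) (2*N)" using Fmat_carrier[of q sr "Suc m"] unfolding N_def by simp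
  have Fg: "graded (\<lambda>k. k) (wt N) ?F" using graded_map[OF Fmat_graded[of "Suc m" q sr], of cst] unfolding N_def by simp
  have E: "?E \<in> carrier_mat (2*N) (N+1)" using Emat_carrier[of q sr "Suc m"] unfolding N_def by simp
  have Eg: "graded (wt N) (\<lambda>k. k) ?E" using graded_map[OF Emat_graded[of "Suc m" q sr], of cst] unfolding N_def by simp
  have X: "?X \<in> carrier_mat (2*N) (2*N)" and Xg: "graded (wt N) (wt N) ?X" using IH by auto
  have B: "?B \<in> carrier_mat 4 4" by (rule Rbase_carrier)
  have Bg: "graded (wt 2) (wt 2) ?B" by (rule Rbase_graded)
  have A1g: "graded (\<lambda>i. i div (N+1) + i mod (N+1)) (\<lambda>k. k div (2*N) + wt N (k mod (2*N))) (leg23 2 ?F)"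
    by (rule graded_leg23[OF F Fg, where h="(+)"])
  have A2g: "graded (\<lambda>i. wt N (i div (2*N) * N + i mod N) + (i div N) mod 2)
                    (\<lambda>i. wt N (i div (2*N) * N + i mod N) + (i div N) mod 2) (leg13 2 2 N ?X)"
    by (rule graded_leg13[OF X Xg, where h="(+)"])
  have A3g: "graded (\<lambda>i. wt 2 (i div N) + i mod N) (\<lambda>i. wt 2 (i div N) + i mod N) (leg12 ?B N)"
    by (rule graded_leg12[OF B Bg, where h="(+)"])
  have A4g: "graded (\<lambda>k. k div (2*N) + wt N (k mod (2*N))) (\<lambda>i. i div (N+1) + i mod (N+1)) (leg23 2 ?E)"
    by (rule graded_leg23[OF E Eg, where h="(+)"])
  have A1c: "leg23 2 ?F \<in> carrier_mat (2*(N+1)) (2*(2*N))" by (rule leg23_carrier[OF F])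
  have A2c: "leg13 2 2 N ?X \<in> carrier_mat (2*2*N) (2*2*N)" by (rule leg13_carrier)
  have A3c: "leg12 ?B N \<in> carrier_mat (4*N) (4*N)" by (rule leg12_carrier[OF B])
  have A4c: "leg23 2 ?E \<in> carrier_mat (2*(2*N)) (2*(N+1))" by (rule leg23_carrier[OF E])
  have eq: "Rhalf q s sr (Suc (Suc m)) t = leg23 2 ?F * leg13 2 2 N ?X * leg12 ?B N * leg23 2 ?E"
    unfolding N_def by simp
  note a = arith3[OF N0, where M=2]
  have g: "graded (\<lambda>i. i div (N+1) + i mod (N+1)) (\<lambda>i. i div (N+1) + i mod (N+1))
       (leg23 2 ?F * leg13 2 2 N ?X * leg12 ?B N * leg23 2 ?E)"
  proof (rule graded_mult[OF graded_mult[OF graded_mult[OF A1g A2g] A3g] A4g])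
    have "(2::nat)*(2*N) = 2*2*N" "(2::nat)*2*N = 4*N" "(4::nat)*N = 2*(2*N)" by simp_all
    then show "dim_col (leg23 2 ?F) = dim_row (leg13 2 2 N ?X)"
      "dim_col (leg23 2 ?F * leg13 2 2 N ?X) = dim_row (leg12 ?B N)"
      "dim_col (leg23 2 ?F * leg13 2 2 N ?X * leg12 ?B N) = dim_row (leg23 2 ?E)"
      by (simp_all only: index_mult_mat(2,3) carrier_matD[OF A1c] carrier_matD[OF A2c] carrier_matD[OF A3c] carrier_matD[OF A4c])
    show "\<And>j. j div (2*N) + wt N (j mod (2*N)) = wt N (j div (2*N) * N + j mod N) + (j div N) mod 2"
      by (simp only: a)
    show "\<And>j. wt N (j div (2*N) * N + j mod N) + (j div N) mod 2 = wt 2 (j div N) + j mod N"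
      by (simp only: a)
    show "\<And>j. wt 2 (j div N) + j mod N = j div (2*N) + wt N (j mod (2*N))"
      by (simp only: a)
  qed
  have c: "leg23 2 ?F * leg13 2 2 N ?X * leg12 ?B N * leg23 2 ?E \<in> carrier_mat (2*(N+1)) (2*(N+1))"
    using carrier_matD[OF A1c] carrier_matD[OF A4c] by (intro carrier_matI) (simp_all only: index_mult_mat(2,3))
  show ?case using g c unfolding eq N_def wt_def by simp
qed


lemma Rmat_props:
  "Rmat q s sr (Suc n) (Suc n2) t \<in> carrier_mat ((Suc n+1)*(Suc n2+1)) ((Suc n+1)*(Suc n2+1)) \<and>
   graded (wt (Suc n2+1)) (wt (Suc n2+1)) (Rmat q s sr (Suc n) (Suc n2) t)"
proof (induction n arbitrary: t)
  case 0
  have "Rmat q s sr (Suc 0) (Suc n2) t = Rhalf q s sr (Suc n2) t" by simp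
  moreover have "(Suc 0+1)*(Suc n2+1) = 2*(Suc n2+1)" by simp
  ultimately show ?case using Rhalf_props[of q s sr n2 t] by metis
next
  case (Suc m)
  define M where "M = Suc (Suc m)"
  define P where "P = Suc (Suc n2)"
  have P0: "0 < P" by (simp add: P_def)
  have IH: "\<And>t. Rmat q s sr (Suc m) (Suc n2) t \<in> carrier_mat (M*P) (M*P) \<and> graded (wt P) (wt P) (Rmat q s sr (Suc m) (Suc n2) t)"
    using Suc.IH unfolding M_def P_def by simp
  let ?F = "map_mat cst (Fmat q sr (Suc m))"
  let ?E = "map_mat cst (Emat q sr (Suc m))"
  let ?X = "Rhalf q s sr (Suc n2) (inverse (cst s) ^ Suc m * t)"
  let ?R = "Rmat q s sr (Suc m) (Suc n2) (cst s * t)"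
  have F: "?F \<in> carrier_mat (M+1) (2*M)" using Fmat_carrier[of q sr "Suc m"] unfolding M_def by simp
  have Fg: "graded (\<lambda>k. k) (wt M) ?F" using graded_map[OF Fmat_graded[of "Suc m" q sr], of cst] unfolding M_def by simp
  have E: "?E \<in> carrier_mat (2*M) (M+1)" using Emat_carrier[of q sr "Suc m"] unfolding M_def by simp
  have Eg: "graded (wt M) (\<lambda>k. k) ?E" using graded_map[OF Emat_graded[of "Suc m" q sr], of cst] unfolding M_def by simp
  have X: "?X \<in> carrier_mat (2*P) (2*P)" and Xg: "graded (wt P) (wt P) ?X"
    using Rhalf_props[of q s sr n2 "inverse (cst s) ^ Suc m * t"] unfolding P_def by auto
  have R: "?R \<in> carrier_mat (M*P) (M*P)" and Rg: "graded (wt P) (wt P) ?R" using IH by auto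
  have B1g: "graded (\<lambda>i. i div P + i mod P) (\<lambda>k. wt M (k div P) + k mod P) (leg12 ?F P)"
    by (rule graded_leg12[OF F Fg, where h="(+)"])
  have B2g: "graded (\<lambda>i. wt P (i div (M*P) * P + i mod P) + (i div P) mod M)
                    (\<lambda>i. wt P (i div (M*P) * P + i mod P) + (i div P) mod M) (leg13 2 M P ?X)"
    by (rule graded_leg13[OF X Xg, where h="(+)"])
  have B3g: "graded (\<lambda>i. i div (M*P) + wt P (i mod (M*P))) (\<lambda>i. i div (M*P) + wt P (i mod (M*P))) (leg23 2 ?R)"
    by (rule graded_leg23[OF R Rg, where h="(+)"])
  have B4g: "graded (\<lambda>i. wt M (i div P) + i mod P) (\<lambda>k. k div P + k mod P) (leg12 ?E P)"
    by (rule graded_leg12[OF E Eg, where h="(+)"])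
  have B1c: "leg12 ?F P \<in> carrier_mat ((M+1)*P) (2*M*P)" by (rule leg12_carrier[OF F])
  have B2c: "leg13 2 M P ?X \<in> carrier_mat (2*M*P) (2*M*P)" by (rule leg13_carrier)
  have B3c: "leg23 2 ?R \<in> carrier_mat (2*(M*P)) (2*(M*P))" by (rule leg23_carrier[OF R])
  have B4c: "leg12 ?E P \<in> carrier_mat (2*M*P) ((M+1)*P)" by (rule leg12_carrier[OF E])
  have eq: "Rmat q s sr (Suc (Suc m)) (Suc n2) t = leg12 ?F P * leg13 2 M P ?X * leg23 2 ?R * leg12 ?E P"
    unfolding M_def P_def by simp
  note a = arith3[OF P0, where M=M]
  have g: "graded (\<lambda>i. i div P + i mod P) (\<lambda>k. k div P + k mod P)
       (leg12 ?F P * leg13 2 M P ?X * leg23 2 ?R * leg12 ?E P)"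
  proof (rule graded_mult[OF graded_mult[OF graded_mult[OF B1g B2g] B3g] B4g])
    have "(2::nat)*(M*P) = 2*M*P" by simp
    then show "dim_col (leg12 ?F P) = dim_row (leg13 2 M P ?X)"
      "dim_col (leg12 ?F P * leg13 2 M P ?X) = dim_row (leg23 2 ?R)"
      "dim_col (leg12 ?F P * leg13 2 M P ?X * leg23 2 ?R) = dim_row (leg12 ?E P)"
      by (simp_all only: index_mult_mat(2,3) carrier_matD[OF B1c] carrier_matD[OF B2c] carrier_matD[OF B3c] carrier_matD[OF B4c])
    show "\<And>j. wt M (j div P) + j mod P = wt P (j div (M*P) * P + j mod P) + (j div P) mod M"
      by (simp only: a)
    show "\<And>j. wt P (j div (M*P) * P + j mod P) + (j div P) mod M = j div (M*P) + wt P (j mod (M*P))"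
      by (simp only: a)
    show "\<And>j. j div (M*P) + wt P (j mod (M*P)) = wt M (j div P) + j mod P"
      by (simp only: a)
  qed
  have c: "leg12 ?F P * leg13 2 M P ?X * leg23 2 ?R * leg12 ?E P \<in> carrier_mat ((M+1)*P) ((M+1)*P)"
    using carrier_matD[OF B1c] carrier_matD[OF B4c] by (intro carrier_matI) (simp_all only: index_mult_mat(2,3))
  show ?case using g c unfolding eq M_def P_def wt_def by simp
qed


definition dg :: "nat \<Rightarrow> (nat \<Rightarrow> 'b::semiring_1) \<Rightarrow> 'b mat" where
  "dg N f = mat N N (\<lambda>(i,k). if i = k then f i else 0)"

lemma dg_carrier: "dg N f \<in> carrier_mat N N"
  unfolding dg_def by (rule mat_carrier)

lemma dg_index: "i < N \<Longrightarrow> k < N \<Longrightarrow> dg N f $$ (i,k) = (if i = k then f i else 0)"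
  unfolding dg_def by (subst index_mat(1)) auto

lemma mult_dg_right:
  fixes A :: "'b::semiring_1 mat"
  assumes A: "A \<in> carrier_mat n N" and i: "i < n" and k: "k < N"
  shows "(A * dg N f) $$ (i,k) = A $$ (i,k) * f k"
proof -
  have "(A * dg N f) $$ (i,k) = (\<Sum>j\<in>{0..<N}. A $$ (i,j) * dg N f $$ (j,k))"
    using A i k dg_carrier[of N f] by (simp add: scalar_prod_def)
  also have "\<dots> = (\<Sum>j\<in>{0..<N}. if j = k then A $$ (i,j) * f k else 0)"
    by (rule sum.cong) (auto simp: dg_index k)
  also have "\<dots> = A $$ (i,k) * f k" using k by simp
  finally show ?thesis .
qed

lemma mult_dg_left:
  fixes A :: "'b::semiring_1 mat"
  assumes A: "A \<in> carrier_mat N n" and i: "i < N" and k: "k < n"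
  shows "(dg N f * A) $$ (i,k) = f i * A $$ (i,k)"
proof -
  have "(dg N f * A) $$ (i,k) = (\<Sum>j\<in>{0..<N}. dg N f $$ (i,j) * A $$ (j,k))"
    using A i k dg_carrier[of N f] by (simp add: scalar_prod_def)
  also have "\<dots> = (\<Sum>j\<in>{0..<N}. if j = i then f i * A $$ (j,k) else 0)"
    by (rule sum.cong) (auto simp: dg_index i)
  also have "\<dots> = f i * A $$ (i,k)" using i by simp
  finally show ?thesis .
qed

lemma dg_dims[simp]: "dim_row (dg N f) = N" "dim_col (dg N f) = N"
  unfolding dg_def by (rule dim_row_mat, rule dim_col_mat)

lemma dg_mult: "dg N f * dg N g = dg N (\<lambda>i. f i * (g i :: 'b::semiring_1))"
proof (rule eq_matI)
  fix i k assume i: "i < dim_row (dg N (\<lambda>i. f i * g i))" and k: "k < dim_col (dg N (\<lambda>i. f i * g i))"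
  then have i': "i < N" and k': "k < N" by (simp_all only: dg_dims)
  have "(dg N f * dg N g) $$ (i,k) = f i * dg N g $$ (i,k)" by (rule mult_dg_left[OF dg_carrier i' k'])
  also have "\<dots> = f i * (if i = k then g i else 0)" by (simp only: dg_index[OF i' k'])
  also have "\<dots> = (if i = k then f i * g i else 0)" by simp
  also have "\<dots> = dg N (\<lambda>i. f i * g i) $$ (i,k)" by (simp only: dg_index[OF i' k'])
  finally show "(dg N f * dg N g) $$ (i,k) = dg N (\<lambda>i. f i * g i) $$ (i,k)" .
next
  show "dim_row (dg N f * dg N g) = dim_row (dg N (\<lambda>i. f i * g i))" by (simp only: index_mult_mat(2) dg_dims)
  show "dim_col (dg N f * dg N g) = dim_col (dg N (\<lambda>i. f i * g i))" by (simp only: index_mult_mat(3) dg_dims)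
qed

lemma comm_dg:
  fixes A :: "'b::comm_semiring_1 mat"
  assumes A: "A \<in> carrier_mat N N" and c: "\<And>i k. i < N \<Longrightarrow> k < N \<Longrightarrow> A $$ (i,k) \<noteq> 0 \<Longrightarrow> f i = f k"
  shows "A * dg N f = dg N f * A"
proof (rule eq_matI)
  fix i k assume i: "i < dim_row (dg N f * A)" and k: "k < dim_col (dg N f * A)"
  then have i': "i < N" and k': "k < N" using A dg_carrier[of N f] by auto
  show "(A * dg N f) $$ (i,k) = (dg N f * A) $$ (i,k)"
    unfolding mult_dg_right[OF A i' k'] mult_dg_left[OF A i' k']
    using c[OF i' k'] by (cases "A $$ (i,k) = 0") (auto simp: mult.commute)
qed (use A dg_carrier[of N f] in auto)

lemma main_comm:
  fixes A :: "'b::comm_semiring_1 mat"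
  assumes A: "A \<in> carrier_mat N N"
    and c: "\<And>i k. i < N \<Longrightarrow> k < N \<Longrightarrow> A $$ (i,k) \<noteq> 0 \<Longrightarrow> f i * g i = f k * g k"
  shows "A * dg N f * dg N g = dg N g * dg N f * A"
proof -
  have "A * dg N f * dg N g = A * (dg N f * dg N g)"
    by (rule assoc_mult_mat[OF A dg_carrier dg_carrier])
  also have "\<dots> = A * dg N (\<lambda>i. f i * g i)" by (simp add: dg_mult)
  also have "\<dots> = dg N (\<lambda>i. f i * g i) * A" by (rule comm_dg[OF A c])
  also have "dg N (\<lambda>i. f i * g i) = dg N g * dg N f" by (simp add: dg_mult mult.commute)
  finally show ?thesis .
qed

lemma div_mod_inj: assumes "i div n = k div n" "i mod n = k mod (n::nat)" shows "i = k"
proof -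
  have "i = i div n * n + i mod n" by (rule div_mult_mod_eq[symmetric])
  also have "\<dots> = k div n * n + k mod n" by (simp only: assms)
  also have "\<dots> = k" by (rule div_mult_mod_eq)
  finally show ?thesis .
qed

lemma Rhat_index:
  assumes "j < (n1+1)*(n2+1)" "j' < (n1+1)*(n2+1)"
  shows "Rhat s n1 n2 $$ (j,j') = (if j = j' then
     cst (s powi ((int n1 - 2 * int (j div (n2+1))) * (int n2 - 2 * int (j mod (n2+1))))) else 0)"
  unfolding Rhat_def using assms by (subst index_mat(1)) auto

lemma Rhat_carrier: "Rhat s n1 n2 \<in> carrier_mat ((n1+1)*(n2+1)) ((n1+1)*(n2+1))"
  unfolding Rhat_def by (rule mat_carrier)

definition hv :: "'a::field \<Rightarrow> nat \<Rightarrow> nat \<Rightarrow> nat \<Rightarrow> nat \<Rightarrow> 'a ratfun" where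
  "hv s n m x y = cst (s powi ((int n - 2 * int x) * (int m - 2 * int y)))"

lemma dg_eqI:
  fixes M :: "'b::semiring_1 mat"
  assumes "M \<in> carrier_mat N N" "\<And>i k. i < N \<Longrightarrow> k < N \<Longrightarrow> M $$ (i,k) = (if i = k then f i else 0)"
  shows "M = dg N f"
proof (rule eq_matI)
  fix i k assume i: "i < dim_row (dg N f)" and k: "k < dim_col (dg N f)"
  then have i': "i < N" and k': "k < N" using dg_carrier[of N f] by auto
  show "M $$ (i,k) = dg N f $$ (i,k)" unfolding dg_index[OF i' k'] assms(2)[OF i' k'] ..
qed (use assms(1) dg_carrier[of N f] in auto)

lemma H12_dg:
  fixes n1 n2 n3 :: nat and s :: "'a::field"
  defines "d2 \<equiv> n2 + 1" and "d3 \<equiv> n3 + 1"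
  shows "leg12 (Rhat s n1 n2) d3 = dg ((n1+1)*d2*d3) (\<lambda>i. hv s n1 n2 (i div (d2*d3)) ((i div d3) mod d2))"
proof (rule dg_eqI)
  show "leg12 (Rhat s n1 n2) d3 \<in> carrier_mat ((n1+1)*d2*d3) ((n1+1)*d2*d3)"
    using leg12_carrier[OF Rhat_carrier] unfolding d2_def by blast
  fix i k assume i: "i < (n1+1)*d2*d3" and k: "k < (n1+1)*d2*d3"
  have d3: "0 < d3" unfolding d3_def by simp
  have i2: "i div d3 < (n1+1)*(n2+1)" and k2: "k div d3 < (n1+1)*(n2+1)"
    using i k unfolding d2_def by (auto simp: less_mult_imp_div_less)
  have i1: "i < (n1+1)*(n2+1)*d3" and k1: "k < (n1+1)*(n2+1)*d3" using i k unfolding d2_def .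
  have "leg12 (Rhat s n1 n2) d3 $$ (i,k) = (if i mod d3 = k mod d3 then Rhat s n1 n2 $$ (i div d3, k div d3) else 0)"
    by (rule leg12_index[OF Rhat_carrier i1 k1])
  also have "\<dots> = (if i = k then hv s n1 n2 (i div (d2*d3)) ((i div d3) mod d2) else 0)"
    unfolding Rhat_index[OF i2 k2] hv_def d2_def divMP
    using div_mod_inj[of i d3 k] by auto
  finally show "leg12 (Rhat s n1 n2) d3 $$ (i,k) = (if i = k then hv s n1 n2 (i div (d2*d3)) ((i div d3) mod d2) else 0)" .
qed

lemma H23_dg:
  fixes n1 n2 n3 :: nat and s :: "'a::field"
  defines "d2 \<equiv> n2 + 1" and "d3 \<equiv> n3 + 1"
  shows "leg23 (n1+1) (Rhat s n2 n3) = dg ((n1+1)*d2*d3) (\<lambda>i. hv s n2 n3 ((i div d3) mod d2) (i mod d3))"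
proof (rule dg_eqI)
  show "leg23 (n1+1) (Rhat s n2 n3) \<in> carrier_mat ((n1+1)*d2*d3) ((n1+1)*d2*d3)"
  proof -
    have "(n1+1)*((n2+1)*(n3+1)) = (n1+1)*d2*d3" unfolding d2_def d3_def by (simp only: mult.assoc)
    then show ?thesis using leg23_carrier[OF Rhat_carrier, of "n1+1" s n2 n3] by simp
  qed
  fix i k assume i: "i < (n1+1)*d2*d3" and k: "k < (n1+1)*d2*d3"
  have d: "0 < d2" "0 < d3" unfolding d2_def d3_def by simp_all
  have i2: "i mod (d2*d3) < (n2+1)*(n3+1)" and k2: "k mod (d2*d3) < (n2+1)*(n3+1)"
    using d unfolding d2_def d3_def by simp_all
  have i1: "i < (n1+1)*((n2+1)*(n3+1))" and k1: "k < (n1+1)*((n2+1)*(n3+1))"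
    using i k unfolding d2_def d3_def by (simp_all only: mult.assoc)
  have "leg23 (n1+1) (Rhat s n2 n3) $$ (i,k) = (if i div (d2*d3) = k div (d2*d3) then Rhat s n2 n3 $$ (i mod (d2*d3), k mod (d2*d3)) else 0)"
    using leg23_index[OF Rhat_carrier[of s n2 n3] i1 k1] unfolding d2_def d3_def .
  also have "\<dots> = (if i = k then hv s n2 n3 ((i div d3) mod d2) (i mod d3) else 0)"
    unfolding Rhat_index[OF i2 k2] hv_def
    using div_mod_inj[of i "d2*d3" k] unfolding d3_def[symmetric] d2_def[symmetric] mod_mult_div' modMP
    by auto
  finally show "leg23 (n1+1) (Rhat s n2 n3) $$ (i,k) = (if i = k then hv s n2 n3 ((i div d3) mod d2) (i mod d3) else 0)" .
qed

lemma idx_inj3: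
  assumes "0 < (d3::nat)" "i div (d2*d3) = k div (d2*d3)" "(i div d3) mod d2 = (k div d3) mod d2" "i mod d3 = k mod d3"
  shows "i = k"
proof -
  have "i mod (d3*d2) = d3 * (i div d3 mod d2) + i mod d3" "k mod (d3*d2) = d3 * (k div d3 mod d2) + k mod d3"
    by (rule mod_mult2_eq)+
  then have "i mod (d2*d3) = k mod (d2*d3)" using assms by (simp add: mult.commute)
  then show ?thesis using div_mod_inj assms by blast
qed

lemma H13_dg:
  fixes n1 n2 n3 :: nat and s :: "'a::field"
  defines "d2 \<equiv> n2 + 1" and "d3 \<equiv> n3 + 1"
  shows "leg13 (n1+1) d2 d3 (Rhat s n1 n3) = dg ((n1+1)*d2*d3) (\<lambda>i. hv s n1 n3 (i div (d2*d3)) (i mod d3))"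
proof (rule dg_eqI)
  show "leg13 (n1+1) d2 d3 (Rhat s n1 n3) \<in> carrier_mat ((n1+1)*d2*d3) ((n1+1)*d2*d3)"
    by (rule leg13_carrier)
  fix i k assume i: "i < (n1+1)*d2*d3" and k: "k < (n1+1)*d2*d3"
  have d: "0 < d3" unfolding d3_def by simp
  have X: "Rhat s n1 n3 \<in> carrier_mat ((n1+1)*d3) ((n1+1)*d3)" using Rhat_carrier unfolding d3_def by blast
  have i2: "i div (d2*d3) * d3 + i mod d3 < (n1+1)*(n3+1)" using idx13_lt[OF i] unfolding d3_def .
  have k2: "k div (d2*d3) * d3 + k mod d3 < (n1+1)*(n3+1)" using idx13_lt[OF k] unfolding d3_def .
  have l: "i mod d3 < d3" "k mod d3 < d3" using d by simp_all
  have "leg13 (n1+1) d2 d3 (Rhat s n1 n3) $$ (i,k) = (if (i div d3) mod d2 = (k div d3) mod d2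
     then Rhat s n1 n3 $$ (i div (d2*d3) * d3 + i mod d3, k div (d2*d3) * d3 + k mod d3) else 0)"
    by (rule leg13_index[OF X i k])
  also have "\<dots> = (if i = k then hv s n1 n3 (i div (d2*d3)) (i mod d3) else 0)"
  proof -
    have e: "(i div (d2*d3) * d3 + i mod d3 = k div (d2*d3) * d3 + k mod d3) \<longleftrightarrow>
             (i div (d2*d3) = k div (d2*d3) \<and> i mod d3 = k mod d3)"
      using l divmod_lin divmod_lin2 by metis
    have f: "(i div (d2*d3) * d3 + i mod d3) div d3 = i div (d2*d3)" "(i div (d2*d3) * d3 + i mod d3) mod d3 = i mod d3"
      using divmod_lin[OF l(1)] divmod_lin2[OF l(1)] by blast+
    show ?thesis unfolding Rhat_index[OF i2 k2] hv_def d3_def[symmetric] f e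
      using idx_inj3[OF d, of i d2 k] by auto
  qed
  finally show "leg13 (n1+1) d2 d3 (Rhat s n1 n3) $$ (i,k) = (if i = k then hv s n1 n3 (i div (d2*d3)) (i mod d3) else 0)" .
qed


lemma R12_cond:
  fixes X :: "'b::semiring_1 mat"
  assumes X: "X \<in> carrier_mat (d1*d2) (d1*d2)" and g: "graded (wt d2) (wt d2) X"
    and i: "i < d1*d2*d3" and k: "k < d1*d2*d3" and nz: "leg12 X d3 $$ (i,k) \<noteq> 0"
  shows "i div (d2*d3) + (i div d3) mod d2 = k div (d2*d3) + (k div d3) mod d2 \<and> i mod d3 = k mod d3"
proof -
  have G: "graded (\<lambda>i. (wt d2 (i div d3), i mod d3)) (\<lambda>k. (wt d2 (k div d3), k mod d3)) (leg12 X d3)"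
    by (rule graded_leg12[OF X g, where h=Pair])
  have c: "dim_row (leg12 X d3) = d1*d2*d3" "dim_col (leg12 X d3) = d1*d2*d3"
    using carrier_matD[OF leg12_carrier[OF X, of d3]] by simp_all
  have "(wt d2 (i div d3), i mod d3) = (wt d2 (k div d3), k mod d3)"
    using gradedD[OF G _ _ nz] i k unfolding c by blast
  then show ?thesis unfolding wt_def divMP by simp
qed

lemma R13_cond:
  fixes X :: "'b::semiring_1 mat"
  assumes X: "X \<in> carrier_mat (d1*d3) (d1*d3)" and g: "graded (wt d3) (wt d3) X"
    and i: "i < d1*d2*d3" and k: "k < d1*d2*d3" and nz: "leg13 d1 d2 d3 X $$ (i,k) \<noteq> 0"
  shows "i div (d2*d3) + i mod d3 = k div (d2*d3) + k mod d3 \<and> (i div d3) mod d2 = (k div d3) mod d2"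
proof -
  have d: "0 < d3" using pos3[OF i] by simp
  have G: "graded (\<lambda>i. (wt d3 (i div (d2*d3) * d3 + i mod d3), (i div d3) mod d2))
                  (\<lambda>k. (wt d3 (k div (d2*d3) * d3 + k mod d3), (k div d3) mod d2)) (leg13 d1 d2 d3 X)"
    by (rule graded_leg13[OF X g, where h=Pair])
  have c: "dim_row (leg13 d1 d2 d3 X) = d1*d2*d3" "dim_col (leg13 d1 d2 d3 X) = d1*d2*d3"
    using carrier_matD[OF leg13_carrier[of d1 d2 d3 X]] by simp_all
  have w: "\<And>j. wt d3 (j div (d2*d3) * d3 + j mod d3) = j div (d2*d3) + j mod d3"
  proof -
    fix j
    have l: "j mod d3 < d3" using d by simp
    show "wt d3 (j div (d2*d3) * d3 + j mod d3) = j div (d2*d3) + j mod d3"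
      unfolding wt_def divmod_lin[OF l] divmod_lin2[OF l] ..
  qed
  have "(wt d3 (i div (d2*d3) * d3 + i mod d3), (i div d3) mod d2) = (wt d3 (k div (d2*d3) * d3 + k mod d3), (k div d3) mod d2)"
    using gradedD[OF G _ _ nz] i k unfolding c by blast
  then show ?thesis unfolding w by simp
qed

lemma R23_cond:
  fixes X :: "'b::semiring_1 mat"
  assumes X: "X \<in> carrier_mat (d2*d3) (d2*d3)" and g: "graded (wt d3) (wt d3) X"
    and i: "i < d1*(d2*d3)" and k: "k < d1*(d2*d3)" and nz: "leg23 d1 X $$ (i,k) \<noteq> 0"
  shows "i div (d2*d3) = k div (d2*d3) \<and> (i div d3) mod d2 + i mod d3 = (k div d3) mod d2 + k mod d3"
proof -
  have G: "graded (\<lambda>i. (i div (d2*d3), wt d3 (i mod (d2*d3)))) (\<lambda>k. (k div (d2*d3), wt d3 (k mod (d2*d3)))) (leg23 d1 X)"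
    by (rule graded_leg23[OF X g, where h=Pair])
  have c: "dim_row (leg23 d1 X) = d1*(d2*d3)" "dim_col (leg23 d1 X) = d1*(d2*d3)"
    using carrier_matD[OF leg23_carrier[OF X, of d1]] by simp_all
  have "(i div (d2*d3), wt d3 (i mod (d2*d3))) = (k div (d2*d3), wt d3 (k mod (d2*d3)))"
    using gradedD[OF G _ _ nz] i k unfolding c by blast
  then show ?thesis unfolding wt_def mod_mult_div' modMP by simp
qed

lemma hv_mult:
  assumes "s \<noteq> 0"
  shows "hv s n m x y * hv s n' m' x' y' =
    cst (s powi ((int n - 2*int x)*(int m - 2*int y) + (int n' - 2*int x')*(int m' - 2*int y')))"
  unfolding hv_def cst_mult[symmetric] power_int_add[OF disjI1[OF assms]] ..

lemma ex_lin:
  fixes a b a' b' n1 n2 n3 c :: int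
  assumes "a + b = a' + b'"
  shows "(n1 - 2*a)*(n3 - 2*c) + (n2 - 2*b)*(n3 - 2*c) = (n1 - 2*a')*(n3 - 2*c) + (n2 - 2*b')*(n3 - 2*c)"
proof -
  have "(n1 - 2*a)*(n3 - 2*c) + (n2 - 2*b)*(n3 - 2*c) = (n1 + n2 - 2*(a+b))*(n3 - 2*c)" by (simp add: algebra_simps)
  also have "\<dots> = (n1 + n2 - 2*(a'+b'))*(n3 - 2*c)" using assms by simp
  also have "\<dots> = (n1 - 2*a')*(n3 - 2*c) + (n2 - 2*b')*(n3 - 2*c)" by (simp add: algebra_simps)
  finally show ?thesis .
qed

lemma ex_lin2:
  fixes a b a' b' n1 n2 n3 c :: int
  assumes "b + a = b' + a'"
  shows "(n1 - 2*c)*(n2 - 2*b) + (n1 - 2*c)*(n3 - 2*a) = (n1 - 2*c)*(n2 - 2*b') + (n1 - 2*c)*(n3 - 2*a')"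
proof -
  have "(n1 - 2*c)*(n2 - 2*b) + (n1 - 2*c)*(n3 - 2*a) = (n1 - 2*c)*(n2 + n3 - 2*(b+a))" by (simp add: algebra_simps)
  also have "\<dots> = (n1 - 2*c)*(n2 + n3 - 2*(b'+a'))" using assms by simp
  also have "\<dots> = (n1 - 2*c)*(n2 - 2*b') + (n1 - 2*c)*(n3 - 2*a')" by (simp add: algebra_simps)
  finally show ?thesis .
qed

lemma ex_lin3:
  fixes a b a' b' n1 n2 n3 c :: int
  assumes "a + b = a' + b'"
  shows "(n2 - 2*c)*(n3 - 2*b) + (n1 - 2*a)*(n2 - 2*c) = (n2 - 2*c)*(n3 - 2*b') + (n1 - 2*a')*(n2 - 2*c)"
proof -
  have "(n2 - 2*c)*(n3 - 2*b) + (n1 - 2*a)*(n2 - 2*c) = (n2 - 2*c)*(n1 + n3 - 2*(a+b))" by (simp add: algebra_simps)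
  also have "\<dots> = (n2 - 2*c)*(n1 + n3 - 2*(a'+b'))" using assms by simp
  also have "\<dots> = (n2 - 2*c)*(n3 - 2*b') + (n1 - 2*a')*(n2 - 2*c)" by (simp add: algebra_simps)
  finally show ?thesis .
qed

theorem lemma5p4:
  fixes q s :: "'a::field_char_0" and sr :: "'a \<Rightarrow> 'a" and n1 n2 n3 :: nat
  assumes all_sqrt: "\<forall>x::'a. \<exists>y. y * y = x"
    and sr: "\<forall>x. sr x * sr x = x"
    and q_nz: "q \<noteq> 0"
    and q_not_root: "\<forall>k::nat. k > 0 \<longrightarrow> q ^ k \<noteq> 1"
    and s: "s * s = q"
    and n1: "n1 \<ge> 1" and n2: "n2 \<ge> 1" and n3: "n3 \<ge> 1"
  shows
   "let d1 = n1 + 1; d2 = n2 + 1; d3 = n3 + 1;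
        R12 = leg12 (Rmat q s sr n1 n2 indet) d3;
        R13 = leg13 d1 d2 d3 (Rmat q s sr n1 n3 indet);
        R23 = leg23 d1 (Rmat q s sr n2 n3 indet);
        H12 = leg12 (Rhat s n1 n2) d3;
        H13 = leg13 d1 d2 d3 (Rhat s n1 n3);
        H23 = leg23 d1 (Rhat s n2 n3)
    in R12 * H13 * H23 = H23 * H13 * R12
     \<and> R13 * H23 * H12 = H12 * H23 * R13
     \<and> R23 * H12 * H13 = H13 * H12 * R23
     \<and> R12 * H23 * H13 = H13 * H23 * R12
     \<and> R13 * H12 * H23 = H23 * H12 * R13
     \<and> R23 * H13 * H12 = H12 * H13 * R23"
proof -
  have s0: "s \<noteq> 0" using s q_nz by auto
  obtain a1 where a1: "n1 = Suc a1" using n1 by (cases n1) auto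
  obtain a2 where a2: "n2 = Suc a2" using n2 by (cases n2) auto
  obtain a3 where a3: "n3 = Suc a3" using n3 by (cases n3) auto
  define N where "N = (n1+1)*(n2+1)*(n3+1)"
  define h12 where "h12 = (\<lambda>i. hv s n1 n2 (i div ((n2+1)*(n3+1))) ((i div (n3+1)) mod (n2+1)))"
  define h13 where "h13 = (\<lambda>i. hv s n1 n3 (i div ((n2+1)*(n3+1))) (i mod (n3+1)))"
  define h23 where "h23 = (\<lambda>i. hv s n2 n3 ((i div (n3+1)) mod (n2+1)) (i mod (n3+1)))"
  have H12: "leg12 (Rhat s n1 n2) (n3+1) = dg N h12" unfolding N_def h12_def by (rule H12_dg)
  have H13: "leg13 (n1+1) (n2+1) (n3+1) (Rhat s n1 n3) = dg N h13" unfolding N_def h13_def by (rule H13_dg)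
  have H23: "leg23 (n1+1) (Rhat s n2 n3) = dg N h23" unfolding N_def h23_def by (rule H23_dg)
  let ?X12 = "Rmat q s sr n1 n2 indet"
  let ?X13 = "Rmat q s sr n1 n3 indet"
  let ?X23 = "Rmat q s sr n2 n3 indet"
  have X12: "?X12 \<in> carrier_mat ((n1+1)*(n2+1)) ((n1+1)*(n2+1))" and g12: "graded (wt (n2+1)) (wt (n2+1)) ?X12"
    using Rmat_props[of q s sr a1 a2 indet] unfolding a1 a2 by blast+
  have X13: "?X13 \<in> carrier_mat ((n1+1)*(n3+1)) ((n1+1)*(n3+1))" and g13: "graded (wt (n3+1)) (wt (n3+1)) ?X13"
    using Rmat_props[of q s sr a1 a3 indet] unfolding a1 a3 by blast+
  have X23: "?X23 \<in> carrier_mat ((n2+1)*(n3+1)) ((n2+1)*(n3+1))" and g23: "graded (wt (n3+1)) (wt (n3+1)) ?X23"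
    using Rmat_props[of q s sr a2 a3 indet] unfolding a2 a3 by blast+
  let ?R12 = "leg12 ?X12 (n3+1)"
  let ?R13 = "leg13 (n1+1) (n2+1) (n3+1) ?X13"
  let ?R23 = "leg23 (n1+1) ?X23"
  have R12c: "?R12 \<in> carrier_mat N N" unfolding N_def by (rule leg12_carrier[OF X12])
  have R13c: "?R13 \<in> carrier_mat N N" unfolding N_def by (rule leg13_carrier)
  have R23c: "?R23 \<in> carrier_mat N N"
  proof -
    have "(n1+1)*((n2+1)*(n3+1)) = N" unfolding N_def by (simp only: mult.assoc)
    then show ?thesis using leg23_carrier[OF X23, of "n1+1"] by simp
  qed
  have c12: "h13 i * h23 i = h13 k * h23 k" if i: "i < N" and k: "k < N" and nz: "?R12 $$ (i,k) \<noteq> 0" for i k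
  proof -
    have i': "i < (n1+1)*(n2+1)*(n3+1)" and k': "k < (n1+1)*(n2+1)*(n3+1)" using i k unfolding N_def .
    note e = R12_cond[OF X12 g12 i' k' nz]
    have e1: "int (i div ((n2+1)*(n3+1))) + int ((i div (n3+1)) mod (n2+1)) =
              int (k div ((n2+1)*(n3+1))) + int ((k div (n3+1)) mod (n2+1))"
      using arg_cong[OF conjunct1[OF e], of int] by simp
    have e2: "i mod (n3+1) = k mod (n3+1)" using e by blast
    show ?thesis unfolding h13_def h23_def hv_mult[OF s0] e2 by (simp only: ex_lin[OF e1])
  qed
  have c13: "h23 i * h12 i = h23 k * h12 k" if i: "i < N" and k: "k < N" and nz: "?R13 $$ (i,k) \<noteq> 0" for i k
  proof -
    have i': "i < (n1+1)*(n2+1)*(n3+1)" and k': "k < (n1+1)*(n2+1)*(n3+1)" using i k unfolding N_def .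
    note e = R13_cond[OF X13 g13 i' k' nz]
    have e1: "int (i div ((n2+1)*(n3+1))) + int (i mod (n3+1)) =
              int (k div ((n2+1)*(n3+1))) + int (k mod (n3+1))"
      using arg_cong[OF conjunct1[OF e], of int] by simp
    have e2: "(i div (n3+1)) mod (n2+1) = (k div (n3+1)) mod (n2+1)" using e by blast
    show ?thesis unfolding h12_def h23_def hv_mult[OF s0] e2 by (simp only: ex_lin3[OF e1])
  qed
  have c23: "h12 i * h13 i = h12 k * h13 k" if i: "i < N" and k: "k < N" and nz: "?R23 $$ (i,k) \<noteq> 0" for i k
  proof -
    have i': "i < (n1+1)*((n2+1)*(n3+1))" and k': "k < (n1+1)*((n2+1)*(n3+1))"
      using i k unfolding N_def by (simp_all only: mult.assoc)
    note e = R23_cond[OF X23 g23 i' k' nz]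
    have e1: "int ((i div (n3+1)) mod (n2+1)) + int (i mod (n3+1)) =
              int ((k div (n3+1)) mod (n2+1)) + int (k mod (n3+1))"
      using arg_cong[OF conjunct2[OF e], of int] by simp
    have e2: "i div ((n2+1)*(n3+1)) = k div ((n2+1)*(n3+1))" using e by blast
    show ?thesis unfolding h12_def h13_def hv_mult[OF s0] e2 by (simp only: ex_lin2[OF e1])
  qed
  have 1: "?R12 * dg N h13 * dg N h23 = dg N h23 * dg N h13 * ?R12"
    by (rule main_comm[OF R12c c12])
  have 2: "?R13 * dg N h23 * dg N h12 = dg N h12 * dg N h23 * ?R13"
    by (rule main_comm[OF R13c c13])
  have 3: "?R23 * dg N h12 * dg N h13 = dg N h13 * dg N h12 * ?R23"
    by (rule main_comm[OF R23c c23])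
  have 4: "?R12 * dg N h23 * dg N h13 = dg N h13 * dg N h23 * ?R12"
    by (rule main_comm[OF R12c]) (metis c12 mult.commute)
  have 5: "?R13 * dg N h12 * dg N h23 = dg N h23 * dg N h12 * ?R13"
    by (rule main_comm[OF R13c]) (metis c13 mult.commute)
  have 6: "?R23 * dg N h13 * dg N h12 = dg N h12 * dg N h13 * ?R23"
    by (rule main_comm[OF R23c]) (metis c23 mult.commute)
  show ?thesis unfolding Let_def H12 H13 H23 using 1 2 3 4 5 6 by blast
qed

end
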